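(* Let $n>2$ be an integer. There exist two distinct $n$-multisets $A\neq B$ of complex numbers with $A^{(2)}=B^{(2)}$ if and only if $n$ is a power of $2$.
   Context: An $n$-multiset is a multiset $A=\{a_1,\dots,a_n\}$ of $n$ numbers, counted with multiplicity. For $1\le s\le n$, the multiset of $s$-sums of $A$, denoted $A^{(s)}$, is the multiset of the $\binom{n}{s}$ numbers $a_{i_1}+\dots+a_{i_s}$ over all index sets $1\le i_1<\dots<i_s\le n$. *)

theory Defs
  imports Complex_Main "HOL-Library.Multiset"
begin

definition ssums_list :: "'a::comm_monoid_add list \<Rightarrow> nat \<Rightarrow> 'a multiset" where
  "ssums_list xs s = image_mset (\<lambda>I. \<Sum>i\<in>I. xs ! i)
      (mset_set {I. I \<subseteq> {..<length xs} \<and> card I = s})"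

(* A^(s) for a multiset A, computed from any enumeration of A (independent of the choice). *)
definition ssums :: "'a::comm_monoid_add multiset \<Rightarrow> nat \<Rightarrow> 'a multiset" where
  "ssums A s = ssums_list (SOME xs. mset xs = A) s"

end

theory Submission
  imports Defs "HOL-Computational_Algebra.Polynomial"
begin

definition ps :: "complex multiset \<Rightarrow> nat \<Rightarrow> complex" where
  "ps M k = (\<Sum>x\<in>#M. x ^ k)"

lemma ps_add_mset[simp]: "ps (add_mset x M) k = x ^ k + ps M k"
  by (simp add: ps_def)
lemma ps_empty[simp]: "ps {#} k = 0"
  by (simp add: ps_def)
lemma ps_zero: "ps M 0 = of_nat (size M)"
  by (induction M) auto

lemma ps_poly: "(\<Sum>x\<in>#A. poly p x) = (\<Sum>i\<le>degree p. coeff p i * ps A i)"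
proof (induction A)
  case empty then show ?case by simp
next
  case (add x A)
  then show ?case by (simp add: poly_altdef sum.distrib distrib_left)
qed

lemma sum_count:
  assumes "\<forall>x\<in>#A. x \<noteq> x0 \<longrightarrow> g x = (0::complex)"
  shows "(\<Sum>x\<in>#A. g x) = of_nat (count A x0) * g x0"
  using assms
proof (induction A)
  case empty then show ?case by simp
next
  case (add x A)
  then show ?case by (cases "x = x0") (auto simp: algebra_simps)
qed

lemma ps_unique:
  assumes "\<And>k. ps A k = ps B k"
  shows "A = B"
proof (rule multiset_eqI)
  fix x0
  define F where "F = (set_mset A \<union> set_mset B) - {x0}"
  define p where "p = (\<Prod>y\<in>F. [:-y, 1:])"
  have fin: "finite F" unfolding F_def by auto
  have pv: "poly p x = (\<Prod>y\<in>F. x - y)" for x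
    unfolding p_def poly_prod by simp
  have z: "poly p x = 0" if "x \<in> F" for x
    unfolding pv using fin that by (auto intro: prod_zero)
  have nz: "poly p x0 \<noteq> 0"
    unfolding pv using fin by (auto simp: F_def)
  have "(\<Sum>x\<in>#A. poly p x) = (\<Sum>x\<in>#B. poly p x)"
    by (simp add: ps_poly assms)
  moreover have "(\<Sum>x\<in>#A. poly p x) = of_nat (count A x0) * poly p x0"
    by (rule sum_count) (auto intro: z simp: F_def)
  moreover have "(\<Sum>x\<in>#B. poly p x) = of_nat (count B x0) * poly p x0"
    by (rule sum_count) (auto intro: z simp: F_def)
  ultimately show "count A x0 = count B x0" using nz by simp
qed

definition G :: "complex multiset \<Rightarrow> complex \<Rightarrow> nat \<Rightarrow> complex" where
  "G M c k = (\<Sum>y\<in>#M. \<Sum>z\<in>#M. (y + z + c) ^ k) - (\<Sum>y\<in>#M. (2 * y + c) ^ k)"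

lemma list_mset_sum: "(\<Sum>i<length xs. f (xs ! i)) = (\<Sum>y\<in>#mset xs. f y)"
proof -
  have "(\<Sum>y\<in>#mset xs. f y) = sum_list (map f xs)"
    by (metis mset_map sum_mset_sum_list)
  also have "\<dots> = (\<Sum>i<length xs. f (xs ! i))"
    by (simp add: sum_list_sum_nth atLeast0LessThan)
  finally show ?thesis by simp
qed

lemma tri:
  fixes g :: "nat \<Rightarrow> nat \<Rightarrow> complex"
  assumes "\<And>i j. g i j = g j i"
  shows "2 * (\<Sum>j<n. \<Sum>i<j. g i j) = (\<Sum>j<n. \<Sum>i<n. g i j) - (\<Sum>i<n. g i i)"
proof (induction n)
  case 0 then show ?case by simp
next
  case (Suc n)
  have s1: "(\<Sum>j<Suc n. \<Sum>i<j. g i j) = (\<Sum>j<n. \<Sum>i<j. g i j) + (\<Sum>i<n. g i n)"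
    by simp
  have "(\<Sum>j<Suc n. \<Sum>i<Suc n. g i j) = (\<Sum>j<n. \<Sum>i<n. g i j) + (\<Sum>j<n. g n j) + (\<Sum>i<n. g i n) + g n n"
    by (simp add: sum.distrib)
  moreover have "(\<Sum>j<n. g n j) = (\<Sum>i<n. g i n)" using assms by simp
  ultimately have s2: "(\<Sum>j<Suc n. \<Sum>i<Suc n. g i j) = (\<Sum>j<n. \<Sum>i<n. g i j) + 2 * (\<Sum>i<n. g i n) + g n n"
    by simp
  have s3: "(\<Sum>i<Suc n. g i i) = (\<Sum>i<n. g i i) + g n n" by simp
  show ?case unfolding s1 s2 s3 using Suc.IH by algebra
qed

lemma pairs_set: "{I. I \<subseteq> {..<n::nat} \<and> card I = 2} = (\<lambda>(j,i). {i,j}) ` (SIGMA j:{..<n}. {..<j})"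
proof (rule set_eqI, rule iffI)
  fix I assume "I \<in> {I. I \<subseteq> {..<n} \<and> card I = 2}"
  then obtain a b where ab: "I = {a,b}" "a \<noteq> b" "a < n" "b < n" by (auto simp: card_2_iff)
  show "I \<in> (\<lambda>(j,i). {i,j}) ` (SIGMA j:{..<n}. {..<j})"
  proof (cases "a < b")
    case True
    have "(b,a) \<in> (SIGMA j:{..<n}. {..<j})" using True ab by simp
    moreover have "I = (\<lambda>(j,i). {i,j}) (b,a)" using ab by simp
    ultimately show ?thesis by (rule rev_image_eqI)
  next
    case False then have "b < a" using ab by linarith
    have "(a,b) \<in> (SIGMA j:{..<n}. {..<j})" using \<open>b < a\<close> ab by simp
    moreover have "I = (\<lambda>(j,i). {i,j}) (a,b)" using ab by (simp add: insert_commute)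
    ultimately show ?thesis by (rule rev_image_eqI)
  qed
qed (auto simp: card_2_iff)

lemma pairs_inj: "inj_on (\<lambda>(j,i). {i,j}) (SIGMA j:{..<n::nat}. {..<j})"
  unfolding inj_on_def
  by (clarsimp simp: doubleton_eq_iff)

lemma ssums_G: "2 * ps (ssums M 2) k = G M 0 k"
proof -
  define xs where "xs = (SOME xs. mset xs = M)"
  have mx: "mset xs = M" unfolding xs_def by (rule someI_ex) (rule ex_mset)
  define n where "n = length xs"
  define x where "x i = xs ! i" for i
  have "ps (ssums M 2) k = (\<Sum>I\<in>{I. I \<subseteq> {..<n} \<and> card I = 2}. (\<Sum>i\<in>I. x i) ^ k)"
    unfolding ps_def ssums_def ssums_list_def xs_def[symmetric] n_def x_def
    by (simp only: multiset.map_comp o_def sum_unfold_sum_mset)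
  also have "\<dots> = (\<Sum>p\<in>(SIGMA j:{..<n}. {..<j}). (\<lambda>(j,i). (\<Sum>l\<in>{i,j}. x l) ^ k) p)"
    unfolding pairs_set by (subst sum.reindex[OF pairs_inj]) (simp add: case_prod_beta o_def)
  also have "\<dots> = (\<Sum>j<n. \<Sum>i<j. (x i + x j) ^ k)"
    by (subst sum.Sigma[symmetric]) auto
  finally have e1: "2 * ps (ssums M 2) k = 2 * (\<Sum>j<n. \<Sum>i<j. (x i + x j) ^ k)" by simp
  also have "\<dots> = (\<Sum>j<n. \<Sum>i<n. (x i + x j) ^ k) - (\<Sum>i<n. (x i + x i) ^ k)"
    by (rule tri) (simp add: add.commute)
  also have "\<dots> = G M 0 k"
  proof -
    have a: "(\<Sum>j<n. \<Sum>i<n. (x i + x j) ^ k) = (\<Sum>z\<in>#M. \<Sum>y\<in>#M. (y + z) ^ k)"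
    proof -
      have "(\<Sum>i<length xs. (xs!i + xs!j) ^ k) = (\<Sum>y\<in>#M. (y + xs!j) ^ k)" for j
        using list_mset_sum[of "\<lambda>v. (v + xs!j)^k" xs] mx by simp
      then show ?thesis
        unfolding n_def x_def using list_mset_sum[of "\<lambda>w. \<Sum>y\<in>#M. (y + w) ^ k" xs] mx by simp
    qed
    have b: "(\<Sum>i<n. (x i + x i) ^ k) = (\<Sum>y\<in>#M. (y + y) ^ k)"
      unfolding n_def x_def using list_mset_sum[of "\<lambda>v. (v + v)^k" xs] mx by simp
    have c: "(\<Sum>z\<in>#M. \<Sum>y\<in>#M. (y + z) ^ k) = (\<Sum>y\<in>#M. \<Sum>z\<in>#M. (y + z) ^ k)"
      by (rule sum_mset.swap)
    have d: "(\<Sum>y\<in>#M. (y + y) ^ k) = (\<Sum>y\<in>#M. (2 * y + 0) ^ k)"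
      by (simp only: mult_2 add_0_right)
    have e: "(\<Sum>y\<in>#M. \<Sum>z\<in>#M. (y + z) ^ k) = (\<Sum>y\<in>#M. \<Sum>z\<in>#M. (y + z + 0) ^ k)"
      by (simp only: add_0_right)
    show ?thesis unfolding G_def a b c d e ..
  qed
  finally show ?thesis .
qed

lemma sum_mset_sum_swap: "(\<Sum>x\<in>#M. \<Sum>l\<in>L. f x l) = (\<Sum>l\<in>L. \<Sum>x\<in>#M. f x l)"
  by (induction M) (auto simp: sum.distrib)

lemma sum_mset_cmult: "(\<Sum>x\<in>#M. (c::complex) * f x) = c * (\<Sum>x\<in>#M. f x)"
  by (induction M) (auto simp: distrib_left)

lemma G_binom: "G M 0 k = (\<Sum>l\<le>k. of_nat (k choose l) * ps M l * ps M (k - l)) - 2 ^ k * ps M k"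
proof -
  have "(\<Sum>y\<in>#M. \<Sum>z\<in>#M. (y + z + 0) ^ k)
      = (\<Sum>y\<in>#M. \<Sum>z\<in>#M. \<Sum>l\<le>k. of_nat (k choose l) * y ^ l * z ^ (k - l))"
    by (simp add: binomial_ring)
  also have "\<dots> = (\<Sum>y\<in>#M. \<Sum>l\<le>k. \<Sum>z\<in>#M. (of_nat (k choose l) * y ^ l) * z ^ (k - l))"
    by (simp only: sum_mset_sum_swap)
  also have "\<dots> = (\<Sum>y\<in>#M. \<Sum>l\<le>k. (of_nat (k choose l) * y ^ l) * ps M (k - l))"
    by (simp only: sum_mset_cmult ps_def)
  also have "\<dots> = (\<Sum>l\<le>k. \<Sum>y\<in>#M. y ^ l * (of_nat (k choose l) * ps M (k - l)))"
    by (simp only: sum_mset_sum_swap mult.commute mult.left_commute mult.assoc)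
  also have "\<dots> = (\<Sum>l\<le>k. of_nat (k choose l) * ps M l * ps M (k - l))"
  proof (rule sum.cong[OF refl])
    fix l
    have "(\<Sum>y\<in>#M. y ^ l * (of_nat (k choose l) * ps M (k - l)))
        = (\<Sum>y\<in>#M. (of_nat (k choose l) * ps M (k - l)) * y ^ l)"
      by (simp only: mult.commute)
    also have "\<dots> = (of_nat (k choose l) * ps M (k - l)) * ps M l"
      by (simp only: sum_mset_cmult ps_def)
    finally show "(\<Sum>y\<in>#M. y ^ l * (of_nat (k choose l) * ps M (k - l)))
        = of_nat (k choose l) * ps M l * ps M (k - l)" by simp
  qed
  finally have a: "(\<Sum>y\<in>#M. \<Sum>z\<in>#M. (y + z + 0) ^ k) = (\<Sum>l\<le>k. of_nat (k choose l) * ps M l * ps M (k - l))" .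
  have b: "(\<Sum>y\<in>#M. (2 * y + 0) ^ k) = 2 ^ k * ps M k"
    by (simp add: power_mult_distrib sum_mset_cmult ps_def)
  show ?thesis unfolding G_def a b ..
qed

lemma not_pow2_unique:
  fixes A B :: "complex multiset"
  assumes sz: "size A = n" "size B = n" and eq: "ssums A 2 = ssums B 2"
    and np: "\<not> (\<exists>k. n = 2 ^ k)"
  shows "A = B"
proof (rule ps_unique)
  have GE: "G A 0 k = G B 0 k" for k
    using ssums_G[of A k] ssums_G[of B k] eq by simp
  fix k
  show "ps A k = ps B k"
  proof (induction k rule: less_induct)
    case (less k)
    show ?case
    proof (cases "k = 0")
      case True then show ?thesis using sz by (simp add: ps_zero)
    next
      case False
      define h where "h l = of_nat (k choose l) * (ps A l * ps A (k - l) - ps B l * ps B (k - l))" for l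
      have h0: "h l = 0" if "l \<in> {..k} - {0, k}" for l
      proof -
        have "l < k" "k - l < k" "0 < l" using that by auto
        then show ?thesis unfolding h_def using less.IH[of l] less.IH[of "k - l"] by simp
      qed
      have "(\<Sum>l\<le>k. h l) = (\<Sum>l\<in>{0, k}. h l)"
        by (rule sum.mono_neutral_right) (use h0 in auto)
      also have "\<dots> = h 0 + h k" using False by simp
      also have "\<dots> = 2 * of_nat n * (ps A k - ps B k)"
        unfolding h_def using sz by (simp add: ps_zero algebra_simps)
      finally have s: "(\<Sum>l\<le>k. h l) = 2 * of_nat n * (ps A k - ps B k)" .
      have "(\<Sum>l\<le>k. h l) = (\<Sum>l\<le>k. of_nat (k choose l) * ps A l * ps A (k - l))
            - (\<Sum>l\<le>k. of_nat (k choose l) * ps B l * ps B (k - l))"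
        unfolding h_def by (simp add: sum_subtractf algebra_simps)
      also have "\<dots> = 2 ^ k * (ps A k - ps B k)"
        using GE[of k] unfolding G_binom by (simp add: algebra_simps)
      finally have "2 * of_nat n * (ps A k - ps B k) = 2 ^ k * (ps A k - ps B k)" using s by simp
      show ?thesis
      proof (rule ccontr)
        assume ne: "ps A k \<noteq> ps B k"
        then have "2 * of_nat n = (2 ^ k :: complex)"
          using \<open>2 * of_nat n * (ps A k - ps B k) = 2 ^ k * (ps A k - ps B k)\<close> by simp
        then have "of_nat (2 * n) = (of_nat (2 ^ k) :: complex)" by simp
        then have "2 * n = 2 ^ k" using of_nat_eq_iff by blast
        then have "n = 2 ^ (k - 1)" using False
          by (cases k) auto
        then show False using np by blast
      qed
    qed
  qed
qed

definition X :: "complex multiset \<Rightarrow> complex multiset \<Rightarrow> complex \<Rightarrow> nat \<Rightarrow> complex" where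
  "X M N c k = (\<Sum>y\<in>#M. \<Sum>z\<in>#N. (y + z + c) ^ k)"

lemma X_sym: "X M N c k = X N M c k"
  unfolding X_def by (subst sum_mset.swap) (simp add: add.commute add.left_commute)

lemma G_union: "G (M + N) c k = G M c k + G N c k + 2 * X M N c k"
proof -
  have "(\<Sum>y\<in>#M+N. \<Sum>z\<in>#M+N. (y + z + c) ^ k)
     = X M M c k + X M N c k + (X N M c k + X N N c k)"
    unfolding X_def by (simp add: sum_mset.distrib)
  then show ?thesis unfolding G_def using X_sym[of N M c k]
    by (simp add: X_def algebra_simps)
qed

lemma G_shift: "G (image_mset (\<lambda>x. x + d) M) c k = G M (c + 2 * d) k"
  unfolding G_def by (simp add: multiset.map_comp o_def algebra_simps)

lemma X_shift: "X M (image_mset (\<lambda>x. x + d) N) c k = X M N (c + d) k"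
  unfolding X_def by (simp add: multiset.map_comp o_def algebra_simps)

primrec TM :: "nat \<Rightarrow> complex multiset \<times> complex multiset" where
  "TM 0 = ({#0#}, {#1#})"
| "TM (Suc k) = (fst (TM k) + image_mset (\<lambda>x. x + of_nat (2 ^ k)) (snd (TM k)),
                 snd (TM k) + image_mset (\<lambda>x. x + of_nat (2 ^ k)) (fst (TM k)))"

lemma TM_props:
  "size (fst (TM k)) = 2 ^ k \<and> size (snd (TM k)) = 2 ^ k \<and> 0 \<in># fst (TM k)
   \<and> (\<forall>x\<in>#fst (TM k). \<exists>m::nat. x = of_nat m)
   \<and> (\<forall>x\<in>#snd (TM k). \<exists>m::nat. x = of_nat (Suc m))
   \<and> (\<forall>c j. G (fst (TM k)) c j = G (snd (TM k)) c j)"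
proof (induction k)
  case 0
  show ?case by (auto simp: G_def intro: exI[of _ 0])
next
  case (Suc k)
  define A where "A = fst (TM k)"
  define B where "B = snd (TM k)"
  define d :: complex where "d = of_nat (2 ^ k)"
  have IH: "size A = 2 ^ k" "size B = 2 ^ k" "0 \<in># A"
    "\<forall>x\<in>#A. \<exists>m::nat. x = of_nat m" "\<forall>x\<in>#B. \<exists>m::nat. x = of_nat (Suc m)"
    "\<And>c j. G A c j = G B c j"
    using Suc unfolding A_def B_def by auto
  have F: "fst (TM (Suc k)) = A + image_mset (\<lambda>x. x + d) B"
    "snd (TM (Suc k)) = B + image_mset (\<lambda>x. x + d) A"
    by (simp_all add: A_def B_def d_def)
  have p1: "\<forall>x\<in>#A + image_mset (\<lambda>x. x + d) B. \<exists>m::nat. x = of_nat m"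
  proof
    fix x assume "x \<in># A + image_mset (\<lambda>x. x + d) B"
    then consider "x \<in># A" | y where "y \<in># B" "x = y + d" by auto
    then show "\<exists>m::nat. x = of_nat m"
    proof cases
      case 1 then show ?thesis using IH(4) by auto
    next
      case 2
      then obtain m where "y = of_nat (Suc m)" using IH(5) by auto
      then have "x = of_nat (Suc m + 2 ^ k)" using 2 by (simp add: d_def)
      then show ?thesis by blast
    qed
  qed
  have p2: "\<forall>x\<in>#B + image_mset (\<lambda>x. x + d) A. \<exists>m::nat. x = of_nat (Suc m)"
  proof
    fix x assume "x \<in># B + image_mset (\<lambda>x. x + d) A"
    then consider "x \<in># B" | y where "y \<in># A" "x = y + d" by auto
    then show "\<exists>m::nat. x = of_nat (Suc m)"
    proof cases
      case 1 then show ?thesis using IH(5) by auto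
    next
      case 2
      then obtain m where "y = of_nat m" using IH(4) by auto
      then have "x = of_nat (Suc (m + 2 ^ k - 1))" using 2 by (simp add: d_def)
      then show ?thesis by blast
    qed
  qed
  have p3: "G (A + image_mset (\<lambda>x. x + d) B) c j = G (B + image_mset (\<lambda>x. x + d) A) c j" for c j
    unfolding G_union G_shift X_shift using IH(6)[of c j] IH(6)[of "c + 2 * d" j] X_sym[of A B "c + d" j]
    by simp
  show ?case unfolding F using IH(1-3) p1 p2 p3 by simp
qed

lemma pow2_exists:
  "\<exists>A B :: complex multiset. size A = 2 ^ k \<and> size B = 2 ^ k \<and> A \<noteq> B \<and> ssums A 2 = ssums B 2"
proof (intro exI conjI)
  let ?A = "fst (TM k)" and ?B = "snd (TM k)"
  show "size ?A = 2 ^ k" "size ?B = 2 ^ k" using TM_props by auto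
  have "0 \<notin># ?B"
  proof
    assume "0 \<in># ?B"
    then obtain m :: nat where "(0::complex) = of_nat (Suc m)" using TM_props[of k] by blast
    then show False by (metis of_nat_eq_0_iff nat.distinct(1))
  qed
  then show "?A \<noteq> ?B" using TM_props[of k] by auto
  show "ssums ?A 2 = ssums ?B 2"
  proof (rule ps_unique)
    fix j
    have "2 * ps (ssums ?A 2) j = 2 * ps (ssums ?B 2) j"
      unfolding ssums_G using TM_props[of k] by auto
    then show "ps (ssums ?A 2) j = ps (ssums ?B 2) j" by simp
  qed
qed

theorem mainTheorem1:
  fixes n :: nat
  assumes "n > 2"
  shows "(\<exists>A B :: complex multiset. size A = n \<and> size B = n \<and> A \<noteq> B \<and>
            ssums A 2 = ssums B 2) \<longleftrightarrow> (\<exists>k::nat. n = 2 ^ k)"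
proof
  assume "\<exists>A B :: complex multiset. size A = n \<and> size B = n \<and> A \<noteq> B \<and> ssums A 2 = ssums B 2"
  then obtain A B :: "complex multiset" where "size A = n" "size B = n" "A \<noteq> B" "ssums A 2 = ssums B 2"
    by blast
  then show "\<exists>k::nat. n = 2 ^ k" using not_pow2_unique by blast
next
  assume "\<exists>k::nat. n = 2 ^ k"
  then obtain k where "n = 2 ^ k" by blast
  then show "\<exists>A B :: complex multiset. size A = n \<and> size B = n \<and> A \<noteq> B \<and> ssums A 2 = ssums B 2"
    using pow2_exists by blast
qed

end
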